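(* Let $\mathcal{S}$ be a normal SPN over Boolean variables $X_1,\ldots,X_N$ and let $\mathcal{B}$ be the Bayesian network with ADD CPDs constructed from $\mathcal{S}$ as described in the context. Then $\Pr_{\mathcal{S}}(\mathbf{x})=\Pr_{\mathcal{B}}(\mathbf{x})$ for all assignments $\mathbf{x}$ of $X_1,\ldots,X_N$, where $\Pr_{\mathcal{B}}(\mathbf{x})=\sum_{\mathbf{h}}\Pr_{\mathcal{B}}(\mathbf{x},\mathbf{h})$ is the marginal over the observable variables, the sum ranging over joint assignments $\mathbf{h}$ of all hidden variables and $\Pr_{\mathcal{B}}(\mathbf{x},\mathbf{h})$ being the product of the CPDs of all variables of $\mathcal{B}$.
   Context: SPNs. Let $X_1,\ldots,X_N$ be Boolean variables. An SPN is a finite rooted DAG whose internal nodes are sum and product nodes, each edge $(v,u)$ out of a sum node carrying a weight $w_{v,u}\ge 0$, and whose terminal nodes are indicators $\mathbb{I}_{x_n},\mathbb{I}_{\bar x_n}$ or univariate distribution nodes over some $X_n$ with parameter $p\in[0,1]$ (value $p\mathbb{I}_{x_n}+(1-p)\mathbb{I}_{\bar x_n}$, where for an assignment $\mathbf{x}$, $\mathbb{I}_{x_n}=1$ iff $X_n$ is true and $\mathbb{I}_{\bar x_n}=1-\mathbb{I}_{x_n}$); products multiply their children's values, sum nodes take $\sum_u w_{v,u}\mathrm{val}(u)$, $f_{\mathcal{S}}(\mathbf{x})$ is the root value and $\Pr_{\mathcal{S}}(\mathbf{x})=f_{\mathcal{S}}(\mathbf{x})/\sum_{\mathbf{x}'}f_{\mathcal{S}}(\mathbf{x}')$.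 The scope of a terminal node over $X_n$ is $\{X_n\}$; an internal node's scope is the union of its children's scopes. The SPN is over $X_1,\ldots,X_N$ if the root's scope is $\{X_1,\ldots,X_N\}$. It is normal if (1) it is complete (children of each sum node have equal scopes) and decomposable (children of each product node have pairwise disjoint scopes); (2) the weights leaving each sum node are nonnegative and sum to 1; (3) every terminal node is a univariate distribution node and every sum node has scope size at least 2. Construction. From a normal SPN $\mathcal{S}$ over $X_1,\ldots,X_N$ build a Bayesian network $\mathcal{B}$: its variables are the observable variables $X_1,\ldots,X_N$ and, for each sum node $v$ with children $u_1,\ldots,u_l$, a hidden variable $H_v$ with values $\{1,\ldots,l\}$; its edges are exactly $H_v\to X$ for each sum node $v$ and each $X\in\mathrm{scope}(v)$. The CPD of $H_v$ is the decision stump $\mathcal{A}_{H_v}$: $\Pr(H_v=i)=w_{v,u_i}$. The CPD of $X$ is the ADD $\mathcal{A}_X$ obtained by taking the subgraph of $\mathcal{S}$ induced by the nodes whose scope contains $X$ (in which each product node has exactly one child), contracting every product node (connecting each of its parents to its unique child and deleting it; if it is the root, its child becomes the root), turning each sum node $v$ into an ADD node labelled $H_v$ whose $i$-th out-edge goes to the image of its $i$-th child $u_i$, and keeping each terminal node (a univariate distribution over $X$) as an ADD terminal carrying that distribution; $\Pr(X=x\mid \mathrm{Pa}(X)=\mathbf{h})$ is the probability of $x$ under the distribution at the terminal reached by following $\mathcal{A}_X$ from its root according to $\mathbf{h}$. *)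

theory Defs
  imports Complex_Main "HOL-Library.FuncSet"
begin

text \<open>Observable variables are X_1..X_N, identified with the naturals 1..N.
  A terminal node is either an indicator (Ind n True = I_{x_n}, Ind n False = I_{not x_n})
  or a univariate distribution node Dist n p over X_n.\<close>

datatype spn_kind = SumNode | ProdNode | Ind nat bool | Dist nat real

record 'v spn =
  spn_nodes :: "'v set"
  spn_root  :: 'v
  spn_kind  :: "'v \<Rightarrow> spn_kind"
  spn_ch    :: "'v \<Rightarrow> 'v list"        \<comment> \<open>ordered children u_1..u_l\<close>
  spn_w     :: "'v \<Rightarrow> 'v \<Rightarrow> real"

definition spn_edges :: "'v spn \<Rightarrow> ('v \<times> 'v) set" where
  "spn_edges S = {(v,u). v \<in> spn_nodes S \<and> u \<in> set (spn_ch S v)}"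

definition is_terminal :: "spn_kind \<Rightarrow> bool" where
  "is_terminal k \<longleftrightarrow> k \<noteq> SumNode \<and> k \<noteq> ProdNode"

definition sum_nodes :: "'v spn \<Rightarrow> 'v set" where
  "sum_nodes S = {v \<in> spn_nodes S. spn_kind S v = SumNode}"

definition spn_wf :: "'v spn \<Rightarrow> bool" where
  "spn_wf S \<longleftrightarrow> finite (spn_nodes S) \<and> spn_root S \<in> spn_nodes S
     \<and> (\<forall>v\<in>spn_nodes S. set (spn_ch S v) \<subseteq> spn_nodes S \<and> distinct (spn_ch S v))
     \<and> (\<forall>v\<in>spn_nodes S. is_terminal (spn_kind S v) \<longleftrightarrow> spn_ch S v = [])
     \<and> acyclic (spn_edges S)
     \<and> (\<forall>v\<in>spn_nodes S. (spn_root S, v) \<in> (spn_edges S)\<^sup>*)"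

text \<open>Recursion over the DAG is done with fuel; fuel = number of nodes exceeds the height.\<close>

fun scope_f :: "'v spn \<Rightarrow> nat \<Rightarrow> 'v \<Rightarrow> nat set" where
  "scope_f S 0 v = {}"
| "scope_f S (Suc k) v = (case spn_kind S v of
      Ind n b \<Rightarrow> {n}
    | Dist n p \<Rightarrow> {n}
    | _ \<Rightarrow> (\<Union>u\<in>set (spn_ch S v). scope_f S k u))"

definition scope :: "'v spn \<Rightarrow> 'v \<Rightarrow> nat set" where
  "scope S v = scope_f S (card (spn_nodes S)) v"

fun val_f :: "'v spn \<Rightarrow> (nat \<Rightarrow> bool) \<Rightarrow> nat \<Rightarrow> 'v \<Rightarrow> real" where
  "val_f S x 0 v = 0"
| "val_f S x (Suc k) v = (case spn_kind S v of
      Ind n b \<Rightarrow> (if x n = b then 1 else 0)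
    | Dist n p \<Rightarrow> p * (if x n then 1 else 0) + (1 - p) * (if x n then 0 else 1)
    | ProdNode \<Rightarrow> prod_list (map (val_f S x k) (spn_ch S v))
    | SumNode \<Rightarrow> sum_list (map (\<lambda>u. spn_w S v u * val_f S x k u) (spn_ch S v)))"

definition val :: "'v spn \<Rightarrow> (nat \<Rightarrow> bool) \<Rightarrow> 'v \<Rightarrow> real" where
  "val S x v = val_f S x (card (spn_nodes S)) v"

definition f_spn :: "'v spn \<Rightarrow> (nat \<Rightarrow> bool) \<Rightarrow> real" where
  "f_spn S x = val S x (spn_root S)"

definition assignments :: "nat \<Rightarrow> (nat \<Rightarrow> bool) set" where
  "assignments N = Pi\<^sub>E {1..N} (\<lambda>_. UNIV)"

definition Pr_spn :: "nat \<Rightarrow> 'v spn \<Rightarrow> (nat \<Rightarrow> bool) \<Rightarrow> real" where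
  "Pr_spn N S x = f_spn S x / (\<Sum>x'\<in>assignments N. f_spn S x')"

definition spn_over :: "nat \<Rightarrow> 'v spn \<Rightarrow> bool" where
  "spn_over N S \<longleftrightarrow> scope S (spn_root S) = {1..N}"

definition complete :: "'v spn \<Rightarrow> bool" where
  "complete S \<longleftrightarrow> (\<forall>v\<in>sum_nodes S. \<forall>u\<in>set (spn_ch S v). \<forall>u'\<in>set (spn_ch S v).
      scope S u = scope S u')"

definition decomposable :: "'v spn \<Rightarrow> bool" where
  "decomposable S \<longleftrightarrow> (\<forall>v\<in>spn_nodes S. spn_kind S v = ProdNode \<longrightarrow>
      (\<forall>i<length (spn_ch S v). \<forall>j<length (spn_ch S v). i \<noteq> j \<longrightarrow>
          scope S (spn_ch S v ! i) \<inter> scope S (spn_ch S v ! j) = {}))"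

definition normal :: "'v spn \<Rightarrow> bool" where
  "normal S \<longleftrightarrow> complete S \<and> decomposable S
     \<and> (\<forall>v\<in>sum_nodes S. (\<forall>u\<in>set (spn_ch S v). spn_w S v u \<ge> 0)
                          \<and> sum_list (map (spn_w S v) (spn_ch S v)) = 1)
     \<and> (\<forall>v\<in>spn_nodes S. is_terminal (spn_kind S v) \<longrightarrow>
           (\<exists>n p. spn_kind S v = Dist n p \<and> 0 \<le> p \<and> p \<le> 1))
     \<and> (\<forall>v\<in>sum_nodes S. card (scope S v) \<ge> 2)"

text \<open>An ADD node is either an inner node labelled by a (hidden) variable H whose i-th
  out-edge (i = 1..l) goes to the i-th element of the list, or a terminal carrying a
  Bernoulli distribution (parameter p = probability of true) over the observable variable.\<close>

datatype ('a,'h) add_node = ADDInner 'h "'a list" | ADDLeaf real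

record ('a,'h) add =
  add_nodes :: "'a set"
  add_root  :: 'a
  add_node  :: "'a \<Rightarrow> ('a,'h) add_node"

fun add_follow :: "('a,'h) add \<Rightarrow> ('h \<Rightarrow> nat) \<Rightarrow> nat \<Rightarrow> 'a \<Rightarrow> 'a" where
  "add_follow A h 0 a = a"
| "add_follow A h (Suc k) a = (case add_node A a of
      ADDInner H succs \<Rightarrow> add_follow A h k (succs ! (h H - 1))
    | ADDLeaf p \<Rightarrow> a)"

text \<open>Pr(X = b | Pa(X) = h) read off the terminal reached from the root.\<close>
definition add_cpd :: "('a,'h) add \<Rightarrow> ('h \<Rightarrow> nat) \<Rightarrow> bool \<Rightarrow> real" where
  "add_cpd A h b = (case add_node A (add_follow A h (card (add_nodes A)) (add_root A)) of
      ADDLeaf p \<Rightarrow> (if b then p else 1 - p)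
    | ADDInner H s \<Rightarrow> 0)"

text \<open>Image of a node of the subgraph induced by the nodes whose scope contains X after
  contracting product nodes (each such product node has a unique child containing X).\<close>
fun contract_f :: "'v spn \<Rightarrow> nat \<Rightarrow> nat \<Rightarrow> 'v \<Rightarrow> 'v" where
  "contract_f S X 0 u = u"
| "contract_f S X (Suc k) u = (if spn_kind S u = ProdNode
      then contract_f S X k (THE c. c \<in> set (spn_ch S u) \<and> X \<in> scope S c)
      else u)"

definition contract :: "'v spn \<Rightarrow> nat \<Rightarrow> 'v \<Rightarrow> 'v" where
  "contract S X u = contract_f S X (card (spn_nodes S)) u"

text \<open>The ADD CPD A_X of observable X; inner nodes are labelled by the sum node v
  (standing for the hidden variable H_v).\<close>
definition add_of :: "'v spn \<Rightarrow> nat \<Rightarrow> ('v,'v) add" where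
  "add_of S X = \<lparr> add_nodes = {u \<in> spn_nodes S. X \<in> scope S u \<and> spn_kind S u \<noteq> ProdNode},
      add_root = contract S X (spn_root S),
      add_node = (\<lambda>u. case spn_kind S u of
          SumNode \<Rightarrow> ADDInner u (map (contract S X) (spn_ch S u))
        | Dist n p \<Rightarrow> ADDLeaf p
        | _ \<Rightarrow> ADDLeaf 0) \<rparr>"

text \<open>Parents of X in the BN: the hidden variables H_v with X in scope(v).\<close>
definition parents :: "'v spn \<Rightarrow> nat \<Rightarrow> 'v set" where
  "parents S X = {v \<in> sum_nodes S. X \<in> scope S v}"

definition hidden_assignments :: "'v spn \<Rightarrow> ('v \<Rightarrow> nat) set" where
  "hidden_assignments S = Pi\<^sub>E (sum_nodes S) (\<lambda>v. {1..length (spn_ch S v)})"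

definition hidden_cpd :: "'v spn \<Rightarrow> 'v \<Rightarrow> nat \<Rightarrow> real" where
  "hidden_cpd S v i = spn_w S v (spn_ch S v ! (i - 1))"

definition Pr_bn_joint :: "nat \<Rightarrow> 'v spn \<Rightarrow> (nat \<Rightarrow> bool) \<Rightarrow> ('v \<Rightarrow> nat) \<Rightarrow> real" where
  "Pr_bn_joint N S x h =
     (\<Prod>v\<in>sum_nodes S. hidden_cpd S v (h v))
     * (\<Prod>X\<in>{1..N}. add_cpd (add_of S X) (restrict h (parents S X)) (x X))"

definition Pr_bn :: "nat \<Rightarrow> 'v spn \<Rightarrow> (nat \<Rightarrow> bool) \<Rightarrow> real" where
  "Pr_bn N S x = (\<Sum>h\<in>hidden_assignments S. Pr_bn_joint N S x h)"

end

theory Submission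
  imports Defs
begin



definition hgtM :: "'v spn \<Rightarrow> 'v set \<Rightarrow> 'v \<Rightarrow> nat" where
  "hgtM S M v = card {b\<in>M. (v,b) \<in> (spn_edges S)\<^sup>+}"

locale spnL = fixes S :: "'v spn" assumes wf: "spn_wf S" and nrm: "normal S"
begin

abbreviation "E \<equiv> spn_edges S"
abbreviation "V \<equiv> spn_nodes S"
abbreviation "hgt \<equiv> hgtM S V"

lemma finV: "finite V" using wf by (simp add: spn_wf_def)
lemma rootV: "spn_root S \<in> V" using wf by (simp add: spn_wf_def)
lemma chV: "v \<in> V \<Longrightarrow> u \<in> set (spn_ch S v) \<Longrightarrow> u \<in> V" using wf by (auto simp: spn_wf_def)
lemma dist_ch: "v \<in> V \<Longrightarrow> distinct (spn_ch S v)" using wf by (auto simp: spn_wf_def)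
lemma term_ch: "v \<in> V \<Longrightarrow> is_terminal (spn_kind S v) \<longleftrightarrow> spn_ch S v = []" using wf by (auto simp: spn_wf_def)
lemma acyc: "acyclic E" using wf by (simp add: spn_wf_def)
lemma reach_root: "v \<in> V \<Longrightarrow> (spn_root S, v) \<in> E\<^sup>*" using wf by (simp add: spn_wf_def)

lemma edgeI: "v \<in> V \<Longrightarrow> u \<in> set (spn_ch S v) \<Longrightarrow> (v,u) \<in> E"
  by (simp add: spn_edges_def)
lemma edgeD: "(v,u) \<in> E \<Longrightarrow> v \<in> V \<and> u \<in> set (spn_ch S v)"
  by (simp add: spn_edges_def)

lemma trancl_V: "(v,u) \<in> E\<^sup>+ \<Longrightarrow> u \<in> V"
  by (induction rule: trancl_induct) (auto dest!: edgeD intro: chV)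

lemma hgt_mono:
  assumes "finite M" "(v,u) \<in> E\<^sup>+"
  shows "hgtM S M u \<le> hgtM S M v" "u \<in> M \<Longrightarrow> hgtM S M u < hgtM S M v"
proof -
  have sub: "{b\<in>M. (u,b) \<in> E\<^sup>+} \<subseteq> {b\<in>M. (v,b) \<in> E\<^sup>+}" using assms(2) by auto
  show "hgtM S M u \<le> hgtM S M v" unfolding hgtM_def by (rule card_mono) (use assms sub in auto)
  assume "u \<in> M"
  moreover have "(u,u) \<notin> E\<^sup>+" using acyc by (simp add: acyclic_def)
  ultimately have "{b\<in>M. (u,b) \<in> E\<^sup>+} \<subset> {b\<in>M. (v,b) \<in> E\<^sup>+}" using sub assms(2) by blast
  moreover have "finite {b\<in>M. (v,b) \<in> E\<^sup>+}" using assms by auto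
  ultimately show "hgtM S M u < hgtM S M v" unfolding hgtM_def by (simp add: psubset_card_mono)
qed

lemma hgt_less: "finite M \<Longrightarrow> v \<in> M \<Longrightarrow> hgtM S M v < card M"
proof -
  assume a: "finite M" "v \<in> M"
  have "(v,v) \<notin> E\<^sup>+" using acyc by (simp add: acyclic_def)
  then have "{b\<in>M. (v,b) \<in> E\<^sup>+} \<subset> M" using a by blast
  then show ?thesis unfolding hgtM_def using a by (simp add: psubset_card_mono)
qed

lemma hgt_child: "v \<in> V \<Longrightarrow> u \<in> set (spn_ch S v) \<Longrightarrow> hgt u < hgt v"
  by (rule hgt_mono(2)) (auto intro: finV edgeI chV)

lemma hgt_lt_card: "v \<in> V \<Longrightarrow> hgt v < card V" by (rule hgt_less[OF finV])

lemma val_fuel: "v \<in> V \<Longrightarrow> hgt v < k \<Longrightarrow> hgt v < k' \<Longrightarrow> val_f S x k v = val_f S x k' v"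
proof (induction k arbitrary: v k')
  case 0 then show ?case by simp
next
  case (Suc k)
  then obtain k'' where k': "k' = Suc k''" by (cases k') auto
  have IH: "u \<in> set (spn_ch S v) \<Longrightarrow> val_f S x k u = val_f S x k'' u" for u
    using Suc.IH[of u k''] Suc.prems hgt_child[of v u] chV[of v u] k' by auto
  show ?case unfolding k' using IH
    by (auto split: spn_kind.splits intro!: arg_cong[where f=prod_list] arg_cong[where f=sum_list])
qed

lemma scope_fuel: "v \<in> V \<Longrightarrow> hgt v < k \<Longrightarrow> hgt v < k' \<Longrightarrow> scope_f S k v = scope_f S k' v"
proof (induction k arbitrary: v k')
  case 0 then show ?case by simp
next
  case (Suc k)
  then obtain k'' where k': "k' = Suc k''" by (cases k') auto
  have IH: "u \<in> set (spn_ch S v) \<Longrightarrow> scope_f S k u = scope_f S k'' u" for u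
    using Suc.IH[of u k''] Suc.prems hgt_child[of v u] chV[of v u] k' by auto
  show ?case unfolding k' using IH
    by (auto split: spn_kind.splits)
qed

lemma card_V_Suc: obtains m where "card V = Suc m" using hgt_lt_card[OF rootV] by (cases "card V") auto

lemma val_unfold: "v \<in> V \<Longrightarrow> val S x v = (case spn_kind S v of
      Ind n b \<Rightarrow> (if x n = b then 1 else 0)
    | Dist n p \<Rightarrow> p * (if x n then 1 else 0) + (1 - p) * (if x n then 0 else 1)
    | ProdNode \<Rightarrow> prod_list (map (val S x) (spn_ch S v))
    | SumNode \<Rightarrow> sum_list (map (\<lambda>u. spn_w S v u * val S x u) (spn_ch S v)))"
proof -
  assume v: "v \<in> V"
  obtain m where m: "card V = Suc m" by (rule card_V_Suc)
  have ch: "u \<in> set (spn_ch S v) \<Longrightarrow> val_f S x m u = val_f S x (Suc m) u" for u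
    using val_fuel[of u m "card V"] hgt_child[OF v, of u] hgt_lt_card[OF v] chV[OF v, of u] m
    by auto
  have m1: "map (val_f S x m) (spn_ch S v) = map (val_f S x (Suc m)) (spn_ch S v)"
    using ch by (auto intro: map_cong)
  have m2: "map (\<lambda>u. spn_w S v u * val_f S x m u) (spn_ch S v) = map (\<lambda>u. spn_w S v u * val_f S x (Suc m) u) (spn_ch S v)"
    using ch by (auto intro: map_cong)
  show ?thesis unfolding val_def m val_f.simps m1 m2 by (simp split: spn_kind.splits)
qed

lemma scope_unfold: "v \<in> V \<Longrightarrow> scope S v = (case spn_kind S v of
      Ind n b \<Rightarrow> {n}
    | Dist n p \<Rightarrow> {n}
    | _ \<Rightarrow> (\<Union>u\<in>set (spn_ch S v). scope S u))"
proof -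
  assume v: "v \<in> V"
  obtain m where m: "card V = Suc m" by (rule card_V_Suc)
  have ch: "u \<in> set (spn_ch S v) \<Longrightarrow> scope_f S m u = scope_f S (Suc m) u" for u
    using scope_fuel[of u m "card V"] hgt_child[OF v, of u] hgt_lt_card[OF v] chV[OF v, of u] m
    by auto
  then have m1: "(\<Union>u\<in>set (spn_ch S v). scope_f S m u) = (\<Union>u\<in>set (spn_ch S v). scope_f S (Suc m) u)"
    by auto
  show ?thesis unfolding scope_def m scope_f.simps m1 by (simp split: spn_kind.splits)
qed

end



context spnL begin

lemma compl: "complete S" and decomp: "decomposable S"
  and wsum: "v \<in> sum_nodes S \<Longrightarrow> sum_list (map (spn_w S v) (spn_ch S v)) = 1"
  and termD: "v \<in> V \<Longrightarrow> is_terminal (spn_kind S v) \<Longrightarrow> \<exists>n p. spn_kind S v = Dist n p \<and> 0 \<le> p \<and> p \<le> 1"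
  using nrm by (auto simp: normal_def)

lemma sum_nodes_iff: "v \<in> sum_nodes S \<longleftrightarrow> v \<in> V \<and> spn_kind S v = SumNode"
  by (simp add: sum_nodes_def)

lemma kind_cases:
  assumes "v \<in> V"
  obtains "spn_kind S v = SumNode" | "spn_kind S v = ProdNode" | n p where "spn_kind S v = Dist n p" "0 \<le> p" "p \<le> 1"
  using termD[OF assms] by (cases "spn_kind S v") (auto simp: is_terminal_def)

lemma inner_ch_ne: "v \<in> V \<Longrightarrow> spn_kind S v = SumNode \<or> spn_kind S v = ProdNode \<Longrightarrow> spn_ch S v \<noteq> []"
  using term_ch[of v] by (auto simp: is_terminal_def)

lemma dist_ch_empty: "v \<in> V \<Longrightarrow> spn_kind S v = Dist n p \<Longrightarrow> spn_ch S v = []"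
  using term_ch[of v] by (auto simp: is_terminal_def)

lemma scope_Dist: "v \<in> V \<Longrightarrow> spn_kind S v = Dist n p \<Longrightarrow> scope S v = {n}"
  by (simp add: scope_unfold)

lemma scope_inner: "v \<in> V \<Longrightarrow> spn_kind S v = SumNode \<or> spn_kind S v = ProdNode \<Longrightarrow>
   scope S v = (\<Union>u\<in>set (spn_ch S v). scope S u)"
  by (auto simp: scope_unfold)

lemma scope_ne: "v \<in> V \<Longrightarrow> scope S v \<noteq> {}"
proof (induction "hgt v" arbitrary: v rule: less_induct)
  case less
  show ?case
  proof (cases rule: kind_cases[OF less.prems])
    case 1
    then obtain u where "u \<in> set (spn_ch S v)" using inner_ch_ne[OF less.prems] by (cases "spn_ch S v") auto
    then show ?thesis using less.hyps[of u] hgt_child[OF less.prems] chV[OF less.prems] scope_inner[OF less.prems] 1 by blast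
  next
    case 2
    then obtain u where "u \<in> set (spn_ch S v)" using inner_ch_ne[OF less.prems] by (cases "spn_ch S v") auto
    then show ?thesis using less.hyps[of u] hgt_child[OF less.prems] chV[OF less.prems] scope_inner[OF less.prems] 2 by blast
  next
    case 3 then show ?thesis using scope_Dist[OF less.prems] by simp
  qed
qed

lemma scope_child_sub: "v \<in> V \<Longrightarrow> u \<in> set (spn_ch S v) \<Longrightarrow> scope S u \<subseteq> scope S v"
  by (rule kind_cases[of v]) (auto simp: scope_inner dist_ch_empty)

lemma rtrancl_V: "(v,d) \<in> E\<^sup>* \<Longrightarrow> v \<in> V \<Longrightarrow> d \<in> V"
  by (induction rule: rtrancl_induct) (auto dest!: edgeD intro: chV)

lemma scope_reach: "(v,d) \<in> E\<^sup>* \<Longrightarrow> v \<in> V \<Longrightarrow> scope S d \<subseteq> scope S v"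
proof (induction rule: rtrancl_induct)
  case base then show ?case by simp
next
  case (step y z)
  then show ?case using scope_child_sub[of y z] edgeD[of y z] by blast
qed

lemma sum_child_scope: "v \<in> V \<Longrightarrow> spn_kind S v = SumNode \<Longrightarrow> u \<in> set (spn_ch S v) \<Longrightarrow> scope S u = scope S v"
proof -
  assume a: "v \<in> V" "spn_kind S v = SumNode" "u \<in> set (spn_ch S v)"
  have vs: "v \<in> sum_nodes S" using a by (simp add: sum_nodes_iff)
  have c: "\<forall>v\<in>sum_nodes S. \<forall>u\<in>set (spn_ch S v). \<forall>u'\<in>set (spn_ch S v). scope S u = scope S u'"
    using compl unfolding complete_def .
  have all: "u' \<in> set (spn_ch S v) \<Longrightarrow> scope S u' = scope S u" for u'
    using c vs a(3) by metis
  have "(\<Union>u'\<in>set (spn_ch S v). scope S u') = scope S u" using a(3) all by blast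
  then show ?thesis using scope_inner[of v] a(1,2) by simp
qed

lemma prod_disj: "v \<in> V \<Longrightarrow> spn_kind S v = ProdNode \<Longrightarrow> u1 \<in> set (spn_ch S v) \<Longrightarrow> u2 \<in> set (spn_ch S v)
   \<Longrightarrow> u1 \<noteq> u2 \<Longrightarrow> scope S u1 \<inter> scope S u2 = {}"
proof -
  assume a: "v \<in> V" "spn_kind S v = ProdNode" "u1 \<in> set (spn_ch S v)" "u2 \<in> set (spn_ch S v)" "u1 \<noteq> u2"
  obtain i where i: "i < length (spn_ch S v)" "spn_ch S v ! i = u1" using a(3) by (auto simp: in_set_conv_nth)
  obtain j where j: "j < length (spn_ch S v)" "spn_ch S v ! j = u2" using a(4) by (auto simp: in_set_conv_nth)
  have "i \<noteq> j" using i j a(5) by auto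
  then show ?thesis using decomp a i j by (auto simp: decomposable_def)
qed

lemma prod_unique: "v \<in> V \<Longrightarrow> spn_kind S v = ProdNode \<Longrightarrow> X \<in> scope S v \<Longrightarrow>
   \<exists>!c. c \<in> set (spn_ch S v) \<and> X \<in> scope S c"
  using scope_inner[of v] prod_disj[of v] by auto

definition D :: "'v \<Rightarrow> 'v set" where "D v = {s \<in> sum_nodes S. (v,s) \<in> E\<^sup>*}"

lemma D_sub: "D v \<subseteq> sum_nodes S" by (auto simp: D_def)
lemma fin_sum: "finite (sum_nodes S)" using finV by (simp add: sum_nodes_def)
lemma fin_D: "finite (D v)" using D_sub fin_sum finite_subset by blast

lemma rtrancl_step: "v \<in> V \<Longrightarrow> (v,s) \<in> E\<^sup>* \<longleftrightarrow> s = v \<or> (\<exists>u\<in>set (spn_ch S v). (u,s) \<in> E\<^sup>*)"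
  by (auto elim: converse_rtranclE dest: edgeD intro: converse_rtrancl_into_rtrancl edgeI)

lemma D_Dist: "v \<in> V \<Longrightarrow> spn_kind S v = Dist n p \<Longrightarrow> D v = {}"
  by (auto simp: D_def rtrancl_step dist_ch_empty sum_nodes_iff)

lemma D_prod: "v \<in> V \<Longrightarrow> spn_kind S v = ProdNode \<Longrightarrow> D v = (\<Union>u\<in>set (spn_ch S v). D u)"
  by (auto simp: D_def rtrancl_step sum_nodes_iff)

lemma D_sum: "v \<in> V \<Longrightarrow> spn_kind S v = SumNode \<Longrightarrow> D v = insert v (\<Union>u\<in>set (spn_ch S v). D u)"
  by (auto simp: D_def rtrancl_step sum_nodes_iff)

lemma D_child_notin: "v \<in> V \<Longrightarrow> u \<in> set (spn_ch S v) \<Longrightarrow> v \<notin> D u"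
proof
  assume a: "v \<in> V" "u \<in> set (spn_ch S v)" "v \<in> D u"
  then have "(u,v) \<in> E\<^sup>*" by (simp add: D_def)
  moreover have "(v,u) \<in> E" using a by (simp add: edgeI)
  ultimately have "(v,v) \<in> E\<^sup>+" by (meson rtrancl_into_trancl2)
  then show False using acyc by (simp add: acyclic_def)
qed

lemma D_child_sub: "v \<in> V \<Longrightarrow> u \<in> set (spn_ch S v) \<Longrightarrow> D u \<subseteq> D v"
  by (auto simp: D_def rtrancl_step)

lemma D_disj: "v \<in> V \<Longrightarrow> spn_kind S v = ProdNode \<Longrightarrow> u1 \<in> set (spn_ch S v) \<Longrightarrow> u2 \<in> set (spn_ch S v)
   \<Longrightarrow> u1 \<noteq> u2 \<Longrightarrow> D u1 \<inter> D u2 = {}"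
proof (rule ccontr)
  assume a: "v \<in> V" "spn_kind S v = ProdNode" "u1 \<in> set (spn_ch S v)" "u2 \<in> set (spn_ch S v)" "u1 \<noteq> u2"
    "D u1 \<inter> D u2 \<noteq> {}"
  then obtain s where s: "(u1,s) \<in> E\<^sup>*" "(u2,s) \<in> E\<^sup>*" by (auto simp: D_def)
  have "u1 \<in> V" "u2 \<in> V" using a chV by auto
  then have "scope S s \<subseteq> scope S u1 \<inter> scope S u2" using scope_reach s by blast
  moreover have "s \<in> V" using s \<open>u1 \<in> V\<close> rtrancl_V by blast
  ultimately show False using prod_disj[OF a(1-5)] scope_ne by blast
qed

lemma D_root: "D (spn_root S) = sum_nodes S"
  using reach_root by (auto simp: D_def sum_nodes_iff)

lemma scope_root_sub: "v \<in> V \<Longrightarrow> scope S v \<subseteq> scope S (spn_root S)"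
  using scope_reach reach_root rootV by blast

end



context spnL begin

definition pc :: "nat \<Rightarrow> 'v \<Rightarrow> 'v" where "pc X v = (THE c. c \<in> set (spn_ch S v) \<and> X \<in> scope S c)"

lemma pc: assumes "v \<in> V" "spn_kind S v = ProdNode" "X \<in> scope S v"
  shows "pc X v \<in> set (spn_ch S v)" "X \<in> scope S (pc X v)"
    "c \<in> set (spn_ch S v) \<Longrightarrow> X \<in> scope S c \<Longrightarrow> c = pc X v"
proof -
  have t: "pc X v \<in> set (spn_ch S v) \<and> X \<in> scope S (pc X v)"
    unfolding pc_def by (rule theI'[OF prod_unique[OF assms]])
  then show "pc X v \<in> set (spn_ch S v)" "X \<in> scope S (pc X v)" by simp_all
  show "c \<in> set (spn_ch S v) \<Longrightarrow> X \<in> scope S c \<Longrightarrow> c = pc X v"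
    unfolding pc_def by (rule the1_equality[OF prod_unique[OF assms], symmetric]) simp
qed

lemma contract_fuel: "u \<in> V \<Longrightarrow> X \<in> scope S u \<Longrightarrow> hgt u < k \<Longrightarrow> hgt u < k' \<Longrightarrow> contract_f S X k u = contract_f S X k' u"
proof (induction k arbitrary: u k')
  case 0 then show ?case by simp
next
  case (Suc k)
  then obtain k'' where k': "k' = Suc k''" by (cases k') auto
  show ?case
  proof (cases "spn_kind S u = ProdNode")
    case True
    have "(THE c. c \<in> set (spn_ch S u) \<and> X \<in> scope S c) = pc X u" by (simp add: pc_def)
    moreover have "contract_f S X k (pc X u) = contract_f S X k'' (pc X u)"
    proof (rule Suc.IH)
      note p = pc[OF Suc.prems(1) True Suc.prems(2)]
      show "pc X u \<in> V" by (rule chV[OF Suc.prems(1) p(1)])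
      show "X \<in> scope S (pc X u)" by (rule p(2))
      have "hgt (pc X u) < hgt u" by (rule hgt_child[OF Suc.prems(1) p(1)])
      then show "hgt (pc X u) < k" "hgt (pc X u) < k''" using Suc.prems(3,4) k' by auto
    qed
    moreover have "contract_f S X (Suc k) u = contract_f S X k (THE c. c \<in> set (spn_ch S u) \<and> X \<in> scope S c)"
      unfolding contract_f.simps by (simp only: True simp_thms if_True)
    moreover have "contract_f S X (Suc k'') u = contract_f S X k'' (THE c. c \<in> set (spn_ch S u) \<and> X \<in> scope S c)"
      unfolding contract_f.simps by (simp only: True simp_thms if_True)
    ultimately show ?thesis using k' by simp
  next
    case False then show ?thesis using k' by simp
  qed
qed

lemma contract_prod: "u \<in> V \<Longrightarrow> X \<in> scope S u \<Longrightarrow> spn_kind S u = ProdNode \<Longrightarrow> contract S X u = contract S X (pc X u)"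
proof -
  assume a: "u \<in> V" "X \<in> scope S u" "spn_kind S u = ProdNode"
  obtain m where m: "card V = Suc m" by (rule card_V_Suc)
  note p = pc[OF a(1,3,2)]
  have "contract_f S X m (pc X u) = contract_f S X (card V) (pc X u)"
  proof (rule contract_fuel)
    show "pc X u \<in> V" by (rule chV[OF a(1) p(1)])
    show "X \<in> scope S (pc X u)" by (rule p(2))
    have "hgt (pc X u) < hgt u" by (rule hgt_child[OF a(1) p(1)])
    then show "hgt (pc X u) < m" "hgt (pc X u) < card V" using hgt_lt_card[OF a(1)] m by auto
  qed
  moreover have "contract_f S X (Suc m) u = contract_f S X m (pc X u)"
    unfolding contract_f.simps pc_def by (simp only: a(3) simp_thms if_True)
  ultimately show ?thesis unfolding contract_def m by simp
qed

lemma contract_nonprod: "spn_kind S u \<noteq> ProdNode \<Longrightarrow> contract S X u = u"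
proof -
  assume a: "spn_kind S u \<noteq> ProdNode"
  obtain m where m: "card V = Suc m" by (rule card_V_Suc)
  show ?thesis unfolding contract_def m using a by simp
qed

definition AN :: "nat \<Rightarrow> 'v set" where "AN X = {u \<in> V. X \<in> scope S u \<and> spn_kind S u \<noteq> ProdNode}"

lemma AN_eq: "add_nodes (add_of S X) = AN X" by (simp add: add_of_def AN_def)
lemma fin_AN: "finite (AN X)" using finV by (simp add: AN_def)

lemma contract_in: "u \<in> V \<Longrightarrow> X \<in> scope S u \<Longrightarrow> contract S X u \<in> AN X \<and> (u, contract S X u) \<in> E\<^sup>*"
proof (induction "hgt u" arbitrary: u rule: less_induct)
  case less
  show ?case
  proof (cases "spn_kind S u = ProdNode")
    case True
    note p = pc[OF less.prems(1) True less.prems(2)]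
    have "contract S X (pc X u) \<in> AN X \<and> (pc X u, contract S X (pc X u)) \<in> E\<^sup>*"
    proof (rule less.hyps)
      show "hgt (pc X u) < hgt u" by (rule hgt_child[OF less.prems(1) p(1)])
      show "pc X u \<in> V" by (rule chV[OF less.prems(1) p(1)])
      show "X \<in> scope S (pc X u)" by (rule p(2))
    qed
    moreover have "(u, pc X u) \<in> E" using edgeI[OF less.prems(1) p(1)] .
    ultimately show ?thesis using contract_prod[OF less.prems True]
      by (metis converse_rtrancl_into_rtrancl)
  next
    case False then show ?thesis using less.prems by (simp add: contract_nonprod AN_def)
  qed
qed

definition valid :: "('v \<Rightarrow> nat) \<Rightarrow> bool" where
  "valid h \<longleftrightarrow> (\<forall>s\<in>sum_nodes S. h s \<in> {1..length (spn_ch S s)})"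

definition nxt :: "nat \<Rightarrow> ('v \<Rightarrow> nat) \<Rightarrow> 'v \<Rightarrow> 'v" where
  "nxt X h a = contract S X (spn_ch S a ! (h a - 1))"

lemma valid_child: "valid h \<Longrightarrow> a \<in> V \<Longrightarrow> spn_kind S a = SumNode \<Longrightarrow>
   h a - 1 < length (spn_ch S a) \<and> spn_ch S a ! (h a - 1) \<in> set (spn_ch S a)"
proof -
  assume a: "valid h" "a \<in> V" "spn_kind S a = SumNode"
  then have "a \<in> sum_nodes S" by (simp add: sum_nodes_iff)
  then have "h a \<in> {1..length (spn_ch S a)}" using a(1) unfolding valid_def by blast
  then have "h a - 1 < length (spn_ch S a)" by auto
  then show ?thesis by simp
qed

lemma nxt_props: assumes "a \<in> V" "X \<in> scope S a" "spn_kind S a = SumNode" "valid h"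
  shows "nxt X h a \<in> AN X" "(a, nxt X h a) \<in> E\<^sup>+" "hgtM S (AN X) (nxt X h a) < hgtM S (AN X) a"
proof -
  let ?c = "spn_ch S a ! (h a - 1)"
  have c: "?c \<in> set (spn_ch S a)" using valid_child[OF assms(4,1,3)] by blast
  have cV: "?c \<in> V" using chV[OF assms(1) c] .
  have cX: "X \<in> scope S ?c" using sum_child_scope[OF assms(1,3) c] assms(2) by simp
  show 1: "nxt X h a \<in> AN X" using contract_in[OF cV cX] by (simp add: nxt_def)
  have "(a, ?c) \<in> E" using edgeI[OF assms(1) c] .
  then show 2: "(a, nxt X h a) \<in> E\<^sup>+" using contract_in[OF cV cX] unfolding nxt_def
    by (meson rtrancl_into_trancl2)
  show "hgtM S (AN X) (nxt X h a) < hgtM S (AN X) a" by (rule hgt_mono(2)[OF fin_AN 2 1])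
qed

abbreviation "hp X h \<equiv> restrict h (parents S X)"

lemma add_node_eq: "add_node (add_of S X) u = (case spn_kind S u of
          SumNode \<Rightarrow> ADDInner u (map (contract S X) (spn_ch S u))
        | Dist n p \<Rightarrow> ADDLeaf p
        | _ \<Rightarrow> ADDLeaf 0)" by (simp add: add_of_def)

lemma follow_nonsum: "spn_kind S a \<noteq> SumNode \<Longrightarrow> add_follow (add_of S X) g k a = a"
  by (cases k) (auto simp: add_node_eq split: spn_kind.splits)

lemma follow_step: assumes "a \<in> V" "X \<in> scope S a" "spn_kind S a = SumNode" "valid h"
  shows "add_follow (add_of S X) (hp X h) (Suc k) a = add_follow (add_of S X) (hp X h) k (nxt X h a)"
proof -
  have par: "a \<in> parents S X" using assms by (simp add: parents_def sum_nodes_iff)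
  have l: "h a - 1 < length (spn_ch S a)" using valid_child[OF assms(4,1,3)] by blast
  show ?thesis using assms par l by (simp add: add_node_eq nxt_def)
qed

lemma follow_fuel: "a \<in> AN X \<Longrightarrow> valid h \<Longrightarrow> hgtM S (AN X) a \<le> k \<Longrightarrow> hgtM S (AN X) a \<le> k' \<Longrightarrow>
  add_follow (add_of S X) (hp X h) k a = add_follow (add_of S X) (hp X h) k' a"
proof (induction k arbitrary: a k')
  case 0
  show ?case
  proof (cases "spn_kind S a = SumNode")
    case True
    have aV: "a \<in> V" "X \<in> scope S a" using 0 by (auto simp: AN_def)
    have "hgtM S (AN X) (nxt X h a) < hgtM S (AN X) a" by (rule nxt_props(3)[OF aV True 0(2)])
    then show ?thesis using 0 by simp
  next
    case False then show ?thesis by (metis follow_nonsum)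
  qed
next
  case (Suc k)
  show ?case
  proof (cases "spn_kind S a = SumNode")
    case True
    have aV: "a \<in> V" "X \<in> scope S a" using Suc.prems by (auto simp: AN_def)
    note nx = nxt_props[OF aV True Suc.prems(2)]
    obtain k'' where k': "k' = Suc k''" using Suc.prems nx(3) by (cases k') auto
    show ?thesis unfolding k' follow_step[OF aV True Suc.prems(2)]
      using Suc.IH[OF nx(1) Suc.prems(2), of k''] nx(3) Suc.prems(3,4) k' by (simp add: restrict_def)
  next
    case False then show ?thesis by (metis follow_nonsum)
  qed
qed

definition Fl :: "nat \<Rightarrow> ('v \<Rightarrow> nat) \<Rightarrow> 'v \<Rightarrow> 'v" where
  "Fl X h a = add_follow (add_of S X) (hp X h) (card (AN X)) a"

lemma Fl_nonsum: "spn_kind S a \<noteq> SumNode \<Longrightarrow> Fl X h a = a"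
  by (simp add: Fl_def follow_nonsum)

lemma Fl_sum: assumes "a \<in> V" "X \<in> scope S a" "spn_kind S a = SumNode" "valid h"
  shows "Fl X h a = Fl X h (nxt X h a)"
proof -
  note nx = nxt_props[OF assms]
  have aA: "a \<in> AN X" using assms by (simp add: AN_def)
  have lt: "hgtM S (AN X) a < card (AN X)" by (rule hgt_less[OF fin_AN aA])
  then obtain m where m: "card (AN X) = Suc m" by (cases "card (AN X)") auto
  have lt2: "hgtM S (AN X) (nxt X h a) < card (AN X)" by (rule hgt_less[OF fin_AN nx(1)])
  show ?thesis unfolding Fl_def m follow_step[OF assms]
    using follow_fuel[OF nx(1) assms(4), of m "Suc m"] lt lt2 nx(3) m by simp
qed

definition P :: "nat \<Rightarrow> ('v \<Rightarrow> nat) \<Rightarrow> 'v \<Rightarrow> bool \<Rightarrow> real" where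
  "P X h v b = (case add_node (add_of S X) (Fl X h (contract S X v)) of
      ADDLeaf p \<Rightarrow> (if b then p else 1 - p) | ADDInner H s \<Rightarrow> 0)"

lemma P_prod: "v \<in> V \<Longrightarrow> spn_kind S v = ProdNode \<Longrightarrow> X \<in> scope S v \<Longrightarrow> P X h v b = P X h (pc X v) b"
  by (simp add: P_def contract_prod)

lemma P_sum: "v \<in> V \<Longrightarrow> spn_kind S v = SumNode \<Longrightarrow> X \<in> scope S v \<Longrightarrow> valid h \<Longrightarrow>
   P X h v b = P X h (spn_ch S v ! (h v - 1)) b"
  by (simp add: P_def contract_nonprod Fl_sum nxt_def)

lemma P_dist: "spn_kind S v = Dist n p \<Longrightarrow> P X h v b = (if b then p else 1 - p)"
  by (simp add: P_def contract_nonprod Fl_nonsum add_node_eq)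

end



context spnL begin

abbreviation "rng s \<equiv> {1..length (spn_ch S s)}"

definition ext :: "'v set \<Rightarrow> ('v \<Rightarrow> nat) \<Rightarrow> 'v \<Rightarrow> nat" where
  "ext A h = (\<lambda>s. if s \<in> A then h s else 1)"

definition dep :: "(('v \<Rightarrow> nat) \<Rightarrow> real) \<Rightarrow> 'v set \<Rightarrow> bool" where
  "dep F A \<longleftrightarrow> (\<forall>h h'. valid h \<longrightarrow> valid h' \<longrightarrow> (\<forall>s\<in>A. h s = h' s) \<longrightarrow> F h = F h')"

definition SS :: "'v set \<Rightarrow> (('v \<Rightarrow> nat) \<Rightarrow> real) \<Rightarrow> real" where
  "SS A F = (\<Sum>h\<in>Pi\<^sub>E A rng. (\<Prod>s\<in>A. hidden_cpd S s (h s)) * F (ext A h))"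

lemma sum_ch_ne: "s \<in> sum_nodes S \<Longrightarrow> spn_ch S s \<noteq> []"
  using inner_ch_ne by (auto simp: sum_nodes_iff)

lemma valid_ext: "A \<subseteq> sum_nodes S \<Longrightarrow> h \<in> Pi\<^sub>E A rng \<Longrightarrow> valid (ext A h)"
proof -
  assume a: "A \<subseteq> sum_nodes S" "h \<in> Pi\<^sub>E A rng"
  show ?thesis unfolding valid_def
  proof
    fix s assume s: "s \<in> sum_nodes S"
    show "ext A h s \<in> rng s"
    proof (cases "s \<in> A")
      case True then show ?thesis using a(2) by (auto simp: ext_def)
    next
      case False
      have "spn_ch S s \<noteq> []" using sum_ch_ne[OF s] .
      then have "1 \<le> length (spn_ch S s)" by (cases "spn_ch S s") auto
      then show ?thesis using False by (simp add: ext_def)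
    qed
  qed
qed

lemma valid_upd: "valid h \<Longrightarrow> i \<in> rng v \<Longrightarrow> valid (h(v := i))"
  unfolding valid_def by auto

lemma depD: "dep F A \<Longrightarrow> valid h \<Longrightarrow> valid h' \<Longrightarrow> (\<And>s. s \<in> A \<Longrightarrow> h s = h' s) \<Longrightarrow> F h = F h'"
  unfolding dep_def by blast

lemma depI: "(\<And>h h'. valid h \<Longrightarrow> valid h' \<Longrightarrow> (\<And>s. s \<in> A \<Longrightarrow> h s = h' s) \<Longrightarrow> F h = F h') \<Longrightarrow> dep F A"
  unfolding dep_def by blast

lemma dep_mono: "dep F A \<Longrightarrow> A \<subseteq> B \<Longrightarrow> dep F B"
  unfolding dep_def by blast

lemma sum_rng: "(\<Sum>i\<in>{1..length cs}. g (cs ! (i - 1))) = sum_list (map g cs)"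
proof -
  have "{1..length cs} = Suc ` {0..<length cs}" by (simp add: atLeastLessThanSuc_atLeastAtMost)
  then have "(\<Sum>i\<in>{1..length cs}. g (cs ! (i - 1))) = (\<Sum>i\<in>Suc ` {0..<length cs}. g (cs ! (i - 1)))"
    by (simp only:)
  also have "\<dots> = (\<Sum>j=0..<length cs. g (cs ! j))"
    by (subst sum.reindex) (auto simp: o_def)
  also have "\<dots> = sum_list (map g cs)" by (simp add: sum_list_sum_nth)
  finally show ?thesis .
qed

lemma wsum1: "v \<in> sum_nodes S \<Longrightarrow> (\<Sum>i\<in>rng v. hidden_cpd S v i) = 1"
  unfolding hidden_cpd_def using sum_rng[of "spn_w S v" "spn_ch S v"] wsum by simp

lemma ext_empty: "ext {} h = (\<lambda>_. 1)" by (simp add: ext_def)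

lemma SS_empty: "SS {} F = F (\<lambda>_. 1)"
  by (simp add: SS_def ext_def)

lemma SS_insert: assumes "v \<notin> A" "finite A"
  shows "SS (insert v A) F = (\<Sum>i\<in>rng v. hidden_cpd S v i * SS A (\<lambda>h. F (h(v := i))))"
proof -
  have inj: "inj_on (\<lambda>(y, g). g(v := y)) (rng v \<times> Pi\<^sub>E A rng)" by (rule inj_combinator[OF assms(1)])
  have "SS (insert v A) F = (\<Sum>(i,g)\<in>rng v \<times> Pi\<^sub>E A rng.
      (\<Prod>s\<in>insert v A. hidden_cpd S s ((g(v:=i)) s)) * F (ext (insert v A) (g(v:=i))))"
    unfolding SS_def PiE_insert_eq by (subst sum.reindex[OF inj]) (simp add: case_prod_unfold)
  also have "\<dots> = (\<Sum>(i,g)\<in>rng v \<times> Pi\<^sub>E A rng.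
      hidden_cpd S v i * ((\<Prod>s\<in>A. hidden_cpd S s (g s)) * F ((ext A g)(v:=i))))"
  proof (rule sum.cong[OF refl], clarify)
    fix i g
    have e: "ext (insert v A) (g(v:=i)) = (ext A g)(v:=i)" by (auto simp: ext_def)
    have p: "(\<Prod>s\<in>insert v A. hidden_cpd S s ((g(v:=i)) s)) = hidden_cpd S v i * (\<Prod>s\<in>A. hidden_cpd S s (g s))"
    proof -
      have "(\<Prod>s\<in>A. hidden_cpd S s ((g(v:=i)) s)) = (\<Prod>s\<in>A. hidden_cpd S s (g s))"
        by (rule prod.cong) (use assms in auto)
      then show ?thesis using assms by (simp add: prod.insert)
    qed
    show "(\<Prod>s\<in>insert v A. hidden_cpd S s ((g(v:=i)) s)) * F (ext (insert v A) (g(v:=i))) =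
      hidden_cpd S v i * ((\<Prod>s\<in>A. hidden_cpd S s (g s)) * F ((ext A g)(v:=i)))"
      unfolding e p by simp
  qed
  also have "\<dots> = (\<Sum>i\<in>rng v. hidden_cpd S v i * SS A (\<lambda>h. F (h(v := i))))"
    unfolding sum.cartesian_product[symmetric] SS_def by (simp add: sum_distrib_left)
  finally show ?thesis .
qed

lemma SS_drop: assumes "v \<in> sum_nodes S" "v \<notin> A" "finite A" "A \<subseteq> sum_nodes S" "dep F A"
  shows "SS (insert v A) F = SS A F"
proof -
  have "SS A (\<lambda>h. F (h(v := i))) = SS A F" if i: "i \<in> rng v" for i
    unfolding SS_def
  proof (rule sum.cong[OF refl])
    fix g assume g: "g \<in> Pi\<^sub>E A rng"
    have va: "valid (ext A g)" by (rule valid_ext[OF assms(4) g])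
    have d: "\<And>h h'. valid h \<Longrightarrow> valid h' \<Longrightarrow> (\<forall>s\<in>A. h s = h' s) \<Longrightarrow> F h = F h'"
      using assms(5) unfolding dep_def by blast
    have "F ((ext A g)(v := i)) = F (ext A g)"
      by (rule d[OF valid_upd[OF va i] va]) (use assms(2) in auto)
    then show "(\<Prod>s\<in>A. hidden_cpd S s (g s)) * F ((ext A g)(v := i)) = (\<Prod>s\<in>A. hidden_cpd S s (g s)) * F (ext A g)"
      by simp
  qed
  then have "SS (insert v A) F = (\<Sum>i\<in>rng v. hidden_cpd S v i * SS A F)"
    unfolding SS_insert[OF assms(2,3)] by simp
  also have "\<dots> = SS A F" using wsum1[OF assms(1)] by (simp add: sum_distrib_right[symmetric])
  finally show ?thesis .
qed

lemma SS_sub: assumes "A0 \<subseteq> A" "A \<subseteq> sum_nodes S" "dep F A0"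
  shows "SS A F = SS A0 F"
proof -
  have fB: "finite (A - A0)" using assms(2) fin_sum finite_subset by blast
  have "B \<subseteq> sum_nodes S \<Longrightarrow> B \<inter> A0 = {} \<Longrightarrow> SS (A0 \<union> B) F = SS A0 F" if "finite B" for B
    using that
  proof (induction B rule: finite_induct)
    case empty then show ?case by simp
  next
    case (insert x B)
    have sub: "A0 \<union> B \<subseteq> sum_nodes S" using assms(1,2) insert(4) by blast
    have fin: "finite (A0 \<union> B)" using sub fin_sum finite_subset by blast
    have "SS (insert x (A0 \<union> B)) F = SS (A0 \<union> B) F"
    proof (rule SS_drop)
      show "x \<in> sum_nodes S" using insert(4) by blast
      show "x \<notin> A0 \<union> B" using insert(2,5) by blast
      show "finite (A0 \<union> B)" by (rule fin)
      show "A0 \<union> B \<subseteq> sum_nodes S" by (rule sub)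
      show "dep F (A0 \<union> B)" by (rule dep_mono[OF assms(3)]) blast
    qed
    moreover have "SS (A0 \<union> B) F = SS A0 F" using insert(3-5) by blast
    ultimately show ?case by simp
  qed
  from this[OF fB] assms(1,2) have "SS (A0 \<union> (A - A0)) F = SS A0 F" by blast
  moreover have "A0 \<union> (A - A0) = A" using assms(1) by blast
  ultimately show ?thesis by simp
qed

lemma SS_mult: assumes "finite A" "A \<subseteq> sum_nodes S" "B \<subseteq> sum_nodes S" "A \<inter> B = {}"
   "dep F A" "dep G B"
  shows "SS (A \<union> B) (\<lambda>h. F h * G h) = SS A F * SS B G"
  using assms
proof (induction A arbitrary: F rule: finite_induct)
  case empty
  have v1: "valid (\<lambda>_. 1::nat)" using valid_ext[of "{}" "\<lambda>_. undefined"] by (simp add: ext_def)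
  have c: "F h = F (\<lambda>_. 1)" if "valid h" for h
    by (rule depD[OF empty(4) that v1]) simp
  have "SS B (\<lambda>h. F h * G h) = SS B (\<lambda>h. F (\<lambda>_. 1) * G h)"
    unfolding SS_def
  proof (rule sum.cong[OF refl])
    fix h assume "h \<in> Pi\<^sub>E B rng"
    then have "valid (ext B h)" by (rule valid_ext[OF empty(2)])
    then show "(\<Prod>s\<in>B. hidden_cpd S s (h s)) * (F (ext B h) * G (ext B h)) =
      (\<Prod>s\<in>B. hidden_cpd S s (h s)) * (F (\<lambda>_. 1) * G (ext B h))" using c by simp
  qed
  then show ?case by (simp add: SS_def ext_empty sum_distrib_left mult.left_commute)
next
  case (insert x A)
  have xB: "x \<notin> B" using insert(6) by blast
  have sAB: "A \<union> B \<subseteq> sum_nodes S" using insert(4,5) by blast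
  have fAB: "finite (A \<union> B)" using sAB fin_sum finite_subset by blast
  have xAB: "x \<notin> A \<union> B" using insert(2) xB by blast
  have Gi: "G (h(x:=i)) = G h" if "valid h" "i \<in> rng x" for h i
    by (rule depD[OF insert(8) valid_upd[OF that] that(1)]) (use xB in auto)
  have depi: "dep (\<lambda>h. F (h(x := i))) A" if "i \<in> rng x" for i
  proof (rule depI)
    fix h h' assume a: "valid h" "valid h'" "\<And>s. s \<in> A \<Longrightarrow> h s = h' s"
    show "F (h(x := i)) = F (h'(x := i))"
      by (rule depD[OF insert(7) valid_upd[OF a(1) that] valid_upd[OF a(2) that]]) (use a(3) in auto)
  qed
  have "SS (insert x A \<union> B) (\<lambda>h. F h * G h) =
     (\<Sum>i\<in>rng x. hidden_cpd S x i * SS (A \<union> B) (\<lambda>h. F (h(x := i)) * G (h(x:=i))))"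
    using SS_insert[OF xAB fAB] by simp
  also have "\<dots> = (\<Sum>i\<in>rng x. hidden_cpd S x i * SS (A \<union> B) (\<lambda>h. F (h(x := i)) * G h))"
  proof (rule sum.cong[OF refl])
    fix i assume i: "i \<in> rng x"
    have "SS (A \<union> B) (\<lambda>h. F (h(x := i)) * G (h(x:=i))) = SS (A \<union> B) (\<lambda>h. F (h(x := i)) * G h)"
      unfolding SS_def
    proof (rule sum.cong[OF refl])
      fix h assume "h \<in> Pi\<^sub>E (A \<union> B) rng"
      then have "valid (ext (A \<union> B) h)" by (rule valid_ext[OF sAB])
      then show "(\<Prod>s\<in>A \<union> B. hidden_cpd S s (h s)) * (F ((ext (A \<union> B) h)(x := i)) * G ((ext (A \<union> B) h)(x:=i))) =
        (\<Prod>s\<in>A \<union> B. hidden_cpd S s (h s)) * (F ((ext (A \<union> B) h)(x := i)) * G (ext (A \<union> B) h))"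
        using Gi[OF _ i] by simp
    qed
    then show "hidden_cpd S x i * SS (A \<union> B) (\<lambda>h. F (h(x := i)) * G (h(x:=i))) =
       hidden_cpd S x i * SS (A \<union> B) (\<lambda>h. F (h(x := i)) * G h)" by simp
  qed
  also have "\<dots> = (\<Sum>i\<in>rng x. hidden_cpd S x i * (SS A (\<lambda>h. F (h(x := i))) * SS B G))"
  proof (rule sum.cong[OF refl])
    fix i assume i: "i \<in> rng x"
    have "SS (A \<union> B) (\<lambda>h. F (h(x := i)) * G h) = SS A (\<lambda>h. F (h(x := i))) * SS B G"
    proof (rule insert.IH)
      show "A \<subseteq> sum_nodes S" "B \<subseteq> sum_nodes S" "A \<inter> B = {}" "dep G B"
        using insert(4-6,8) by blast+
      show "dep (\<lambda>h. F (h(x := i))) A" by (rule depi[OF i])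
    qed
    then show "hidden_cpd S x i * SS (A \<union> B) (\<lambda>h. F (h(x := i)) * G h) = hidden_cpd S x i * (SS A (\<lambda>h. F (h(x := i))) * SS B G)"
      by simp
  qed
  also have "\<dots> = SS (insert x A) F * SS B G"
    using SS_insert[OF insert(2,1), of F] by (simp add: sum_distrib_right mult.assoc)
  finally show ?case .
qed

end



context spnL begin

definition G :: "'v \<Rightarrow> (nat \<Rightarrow> bool) \<Rightarrow> ('v \<Rightarrow> nat) \<Rightarrow> real" where
  "G v x h = (\<Prod>X\<in>scope S v. P X h v (x X))"

lemma fin_scope: "v \<in> V \<Longrightarrow> finite (scope S v)"
proof (induction "hgt v" arbitrary: v rule: less_induct)
  case less
  show ?case
  proof (cases rule: kind_cases[OF less.prems])
    case 3 then show ?thesis using scope_Dist[OF less.prems] by simp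
  next
    case 1
    have "finite (scope S u)" if u: "u \<in> set (spn_ch S v)" for u
      by (rule less.hyps[OF hgt_child[OF less.prems u] chV[OF less.prems u]])
    then show ?thesis using scope_inner[OF less.prems] 1 by simp
  next
    case 2
    have "finite (scope S u)" if u: "u \<in> set (spn_ch S v)" for u
      by (rule less.hyps[OF hgt_child[OF less.prems u] chV[OF less.prems u]])
    then show ?thesis using scope_inner[OF less.prems] 2 by simp
  qed
qed

lemma v_in_D: "v \<in> V \<Longrightarrow> spn_kind S v = SumNode \<Longrightarrow> v \<in> D v"
  by (simp add: D_def sum_nodes_iff)

lemma P_dep: "v \<in> V \<Longrightarrow> X \<in> scope S v \<Longrightarrow> dep (\<lambda>h. P X h v b) (D v)"
proof (induction "hgt v" arbitrary: v rule: less_induct)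
  case less
  note v = less.prems(1)
  show ?case
  proof (cases rule: kind_cases[OF v])
    case 3 then show ?thesis by (simp add: P_dist dep_def)
  next
    case 2
    note p = pc[OF v 2 less.prems(2)]
    have "dep (\<lambda>h. P X h (pc X v) b) (D (pc X v))"
      by (rule less.hyps[OF hgt_child[OF v p(1)] chV[OF v p(1)] p(2)])
    then have "dep (\<lambda>h. P X h (pc X v) b) (D v)" by (rule dep_mono[OF _ D_child_sub[OF v p(1)]])
    then show ?thesis using P_prod[OF v 2 less.prems(2)] by simp
  next
    case 1
    show ?thesis
    proof (rule depI)
      fix h h' assume a: "valid h" "valid h'" "\<And>s. s \<in> D v \<Longrightarrow> h s = h' s"
      have hv: "h v = h' v" using a(3) v_in_D[OF v 1] by blast
      let ?c = "spn_ch S v ! (h v - 1)"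
      have c: "?c \<in> set (spn_ch S v)" using valid_child[OF a(1) v 1] by blast
      have cX: "X \<in> scope S ?c" using sum_child_scope[OF v 1 c] less.prems(2) by simp
      have dc: "dep (\<lambda>h. P X h ?c b) (D ?c)"
        by (rule less.hyps[OF hgt_child[OF v c] chV[OF v c] cX])
      have "P X h ?c b = P X h' ?c b"
        by (rule depD[OF dc a(1,2)]) (use a(3) D_child_sub[OF v c] in blast)
      then show "P X h v b = P X h' v b"
        using P_sum[OF v 1 less.prems(2) a(1)] P_sum[OF v 1 less.prems(2) a(2)] hv by simp
    qed
  qed
qed

lemma P_sum1: "v \<in> V \<Longrightarrow> X \<in> scope S v \<Longrightarrow> valid h \<Longrightarrow> P X h v True + P X h v False = 1"
proof (induction "hgt v" arbitrary: v rule: less_induct)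
  case less
  note v = less.prems(1)
  show ?case
  proof (cases rule: kind_cases[OF v])
    case 3 then show ?thesis by (simp add: P_dist)
  next
    case 2
    note p = pc[OF v 2 less.prems(2)]
    have "P X h (pc X v) True + P X h (pc X v) False = 1"
      by (rule less.hyps[OF hgt_child[OF v p(1)] chV[OF v p(1)] p(2) less.prems(3)])
    then show ?thesis using P_prod[OF v 2 less.prems(2)] by simp
  next
    case 1
    let ?c = "spn_ch S v ! (h v - 1)"
    have c: "?c \<in> set (spn_ch S v)" using valid_child[OF less.prems(3) v 1] by blast
    have cX: "X \<in> scope S ?c" using sum_child_scope[OF v 1 c] less.prems(2) by simp
    have "P X h ?c True + P X h ?c False = 1"
      by (rule less.hyps[OF hgt_child[OF v c] chV[OF v c] cX less.prems(3)])
    then show ?thesis using P_sum[OF v 1 less.prems(2,3)] by simp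
  qed
qed

lemma G_dep: "v \<in> V \<Longrightarrow> dep (G v x) (D v)"
proof (rule depI)
  fix h h' assume v: "v \<in> V" and a: "valid h" "valid h'" "\<And>s. s \<in> D v \<Longrightarrow> h s = h' s"
  show "G v x h = G v x h'" unfolding G_def
  proof (rule prod.cong[OF refl])
    fix X assume X: "X \<in> scope S v"
    show "P X h v (x X) = P X h' v (x X)" by (rule depD[OF P_dep[OF v X] a(1,2) a(3)])
  qed
qed

lemma G_sum: "v \<in> V \<Longrightarrow> spn_kind S v = SumNode \<Longrightarrow> valid h \<Longrightarrow> G v x h = G (spn_ch S v ! (h v - 1)) x h"
proof -
  assume v: "v \<in> V" and k: "spn_kind S v = SumNode" and h: "valid h"
  have c: "spn_ch S v ! (h v - 1) \<in> set (spn_ch S v)" using valid_child[OF h v k] by blast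
  show ?thesis unfolding G_def sum_child_scope[OF v k c]
    by (rule prod.cong[OF refl]) (simp add: P_sum[OF v k _ h])
qed

lemma G_prod: "v \<in> V \<Longrightarrow> spn_kind S v = ProdNode \<Longrightarrow> G v x h = (\<Prod>u\<in>set (spn_ch S v). G u x h)"
proof -
  assume v: "v \<in> V" and k: "spn_kind S v = ProdNode"
  have fin: "\<forall>u\<in>set (spn_ch S v). finite (scope S u)" using fin_scope chV[OF v] by blast
  have disj: "\<forall>u\<in>set (spn_ch S v). \<forall>u'\<in>set (spn_ch S v). u \<noteq> u' \<longrightarrow> scope S u \<inter> scope S u' = {}"
    using prod_disj[OF v k] by blast
  have "G v x h = (\<Prod>X\<in>(\<Union>u\<in>set (spn_ch S v). scope S u). P X h v (x X))"
    unfolding G_def using scope_inner[OF v] k by simp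
  also have "\<dots> = (\<Prod>u\<in>set (spn_ch S v). \<Prod>X\<in>scope S u. P X h v (x X))"
    by (rule prod.UNION_disjoint[OF finite_set fin disj])
  also have "\<dots> = (\<Prod>u\<in>set (spn_ch S v). G u x h)"
  proof (rule prod.cong[OF refl])
    fix u assume u: "u \<in> set (spn_ch S v)"
    show "(\<Prod>X\<in>scope S u. P X h v (x X)) = G u x h" unfolding G_def
    proof (rule prod.cong[OF refl])
      fix X assume X: "X \<in> scope S u"
      have Xv: "X \<in> scope S v" using scope_child_sub[OF v u] X by blast
      have "u = pc X v" by (rule pc(3)[OF v k Xv u X])
      then show "P X h v (x X) = P X h u (x X)" using P_prod[OF v k Xv] by simp
    qed
  qed
  finally show ?thesis .
qed

lemma SS_cong: "A \<subseteq> sum_nodes S \<Longrightarrow> (\<And>h. valid h \<Longrightarrow> F h = F' h) \<Longrightarrow> SS A F = SS A F'"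
  unfolding SS_def by (rule sum.cong[OF refl]) (simp add: valid_ext)

lemma SS_prod: "finite C \<Longrightarrow> C \<subseteq> V \<Longrightarrow> (\<forall>u\<in>C. \<forall>u'\<in>C. u \<noteq> u' \<longrightarrow> D u \<inter> D u' = {}) \<Longrightarrow>
  (\<Prod>u\<in>C. SS (D u) (G u x)) = SS (\<Union>u\<in>C. D u) (\<lambda>h. \<Prod>u\<in>C. G u x h)"
proof (induction C rule: finite_induct)
  case empty then show ?case by (simp add: SS_empty)
next
  case (insert c C)
  have cV: "c \<in> V" using insert(4) by blast
  have dC: "dep (\<lambda>h. \<Prod>u\<in>C. G u x h) (\<Union>u\<in>C. D u)"
  proof (rule depI)
    fix h h' assume a: "valid h" "valid h'" "\<And>s. s \<in> (\<Union>u\<in>C. D u) \<Longrightarrow> h s = h' s"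
    show "(\<Prod>u\<in>C. G u x h) = (\<Prod>u\<in>C. G u x h')"
    proof (rule prod.cong[OF refl])
      fix u assume u: "u \<in> C"
      show "G u x h = G u x h'" by (rule depD[OF G_dep a(1,2)]) (use insert(4) u a(3) in blast)+
    qed
  qed
  have disj: "D c \<inter> (\<Union>u\<in>C. D u) = {}"
  proof -
    have "D c \<inter> D u = {}" if "u \<in> C" for u
      using insert(5) insert(2) that by (metis insertCI)
    then show ?thesis by blast
  qed
  have "(\<Prod>u\<in>insert c C. SS (D u) (G u x)) = SS (D c) (G c x) * SS (\<Union>u\<in>C. D u) (\<lambda>h. \<Prod>u\<in>C. G u x h)"
    using insert by simp
  also have "\<dots> = SS (D c \<union> (\<Union>u\<in>C. D u)) (\<lambda>h. G c x h * (\<Prod>u\<in>C. G u x h))"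
    by (rule SS_mult[symmetric, OF fin_D D_sub _ disj G_dep[OF cV] dC]) (use D_sub in blast)
  also have "\<dots> = SS (\<Union>u\<in>insert c C. D u) (\<lambda>h. \<Prod>u\<in>insert c C. G u x h)"
    using insert(1,2) by simp
  finally show ?case .
qed

lemma main: "v \<in> V \<Longrightarrow> val S x v = SS (D v) (G v x)"
proof (induction "hgt v" arbitrary: v rule: less_induct)
  case less
  note v = less.prems(1)
  show ?case
  proof (cases rule: kind_cases[OF v])
    case (3 n p)
    show ?thesis using 3 by (simp add: D_Dist[OF v 3(1)] SS_empty G_def scope_Dist[OF v 3(1)] P_dist val_unfold[OF v])
  next
    case 2
    have IH: "val S x u = SS (D u) (G u x)" if u: "u \<in> set (spn_ch S v)" for u
      by (rule less.hyps[OF hgt_child[OF v u] chV[OF v u]])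
    have "val S x v = prod_list (map (val S x) (spn_ch S v))" using val_unfold[OF v] 2 by simp
    also have "\<dots> = (\<Prod>u\<in>set (spn_ch S v). val S x u)" by (simp add: prod.distinct_set_conv_list dist_ch[OF v])
    also have "\<dots> = (\<Prod>u\<in>set (spn_ch S v). SS (D u) (G u x))" using IH by simp
    also have "\<dots> = SS (\<Union>u\<in>set (spn_ch S v). D u) (\<lambda>h. \<Prod>u\<in>set (spn_ch S v). G u x h)"
      by (rule SS_prod) (use chV[OF v] D_disj[OF v 2] in blast)+
    also have "\<dots> = SS (D v) (G v x)"
      unfolding D_prod[OF v 2] by (rule SS_cong) (use D_sub G_prod[OF v 2] in auto)
    finally show ?thesis .
  next
    case 1
    let ?cs = "spn_ch S v"
    have vs: "v \<in> sum_nodes S" using v 1 by (simp add: sum_nodes_iff)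
    let ?Dr = "\<Union>u\<in>set ?cs. D u"
    have Drsub: "?Dr \<subseteq> sum_nodes S" using D_sub by blast
    have vDr: "v \<notin> ?Dr" using D_child_notin[OF v] by blast
    have finDr: "finite ?Dr" using fin_D by simp
    have "val S x v = sum_list (map (\<lambda>u. spn_w S v u * val S x u) ?cs)" using val_unfold[OF v] 1 by simp
    also have "\<dots> = (\<Sum>i\<in>rng v. spn_w S v (?cs ! (i - 1)) * val S x (?cs ! (i - 1)))"
      by (rule sum_rng[symmetric])
    also have "\<dots> = (\<Sum>i\<in>rng v. hidden_cpd S v i * SS ?Dr (\<lambda>h. G v x (h(v := i))))"
    proof (rule sum.cong[OF refl])
      fix i assume i: "i \<in> rng v"
      let ?c = "?cs ! (i - 1)"
      have c: "?c \<in> set ?cs" using i by auto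
      have cV: "?c \<in> V" by (rule chV[OF v c])
      have "val S x ?c = SS (D ?c) (G ?c x)" by (rule less.hyps[OF hgt_child[OF v c] cV])
      also have "\<dots> = SS ?Dr (G ?c x)"
        by (rule SS_sub[symmetric, OF _ Drsub G_dep[OF cV]]) (use c in blast)
      also have "\<dots> = SS ?Dr (\<lambda>h. G v x (h(v := i)))"
      proof (rule SS_cong[OF Drsub])
        fix h assume h: "valid h"
        have h2: "valid (h(v := i))" by (rule valid_upd[OF h i])
        have "G v x (h(v := i)) = G ?c x (h(v := i))" using G_sum[OF v 1 h2] by simp
        also have "\<dots> = G ?c x h"
          by (rule depD[OF G_dep[OF cV] h2 h]) (use D_child_notin[OF v c] in auto)
        finally show "G ?c x h = G v x (h(v := i))" by simp
      qed
      finally show "spn_w S v ?c * val S x ?c = hidden_cpd S v i * SS ?Dr (\<lambda>h. G v x (h(v := i)))"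
        by (simp add: hidden_cpd_def)
    qed
    also have "\<dots> = SS (insert v ?Dr) (G v x)" by (rule SS_insert[symmetric, OF vDr finDr])
    also have "\<dots> = SS (D v) (G v x)" using D_sum[OF v 1] by simp
    finally show ?thesis .
  qed
qed

end



context spnL begin

lemma add_cpd_eq: "add_cpd (add_of S X) (restrict h (parents S X)) b = P X (ext (sum_nodes S) h) (spn_root S) b"
proof -
  have r: "restrict (ext (sum_nodes S) h) (parents S X) = restrict h (parents S X)"
    by (auto simp: restrict_def ext_def parents_def)
  show ?thesis unfolding add_cpd_def P_def Fl_def r
    by (simp add: AN_eq[symmetric]) (simp add: add_of_def)
qed

lemma f_eq: assumes "spn_over N S"
  shows "f_spn S x = (\<Sum>h\<in>hidden_assignments S. (\<Prod>s\<in>sum_nodes S. hidden_cpd S s (h s)) *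
     (\<Prod>X\<in>{1..N}. P X (ext (sum_nodes S) h) (spn_root S) (x X)))"
  using main[OF rootV, of x] assms
  by (simp add: f_spn_def D_root SS_def G_def hidden_assignments_def spn_over_def)

lemma bn_eq: assumes "spn_over N S" shows "Pr_bn N S x = f_spn S x"
  unfolding f_eq[OF assms] Pr_bn_def Pr_bn_joint_def add_cpd_eq by simp

lemma norm1: assumes "spn_over N S" shows "(\<Sum>x\<in>assignments N. f_spn S x) = 1"
proof -
  have sc: "scope S (spn_root S) = {1..N}" using assms by (simp add: spn_over_def)
  have inner: "(\<Sum>x\<in>assignments N. \<Prod>X\<in>{1..N}. P X (ext (sum_nodes S) h) (spn_root S) (x X)) = 1"
    if h: "h \<in> hidden_assignments S" for h
  proof -
    have va: "valid (ext (sum_nodes S) h)"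
      using valid_ext[of "sum_nodes S" h] h by (simp add: hidden_assignments_def)
    have "(\<Sum>x\<in>assignments N. \<Prod>X\<in>{1..N}. P X (ext (sum_nodes S) h) (spn_root S) (x X))
        = (\<Prod>X\<in>{1..N}. \<Sum>b\<in>UNIV. P X (ext (sum_nodes S) h) (spn_root S) b)"
      unfolding assignments_def by (rule prod_sum_PiE[symmetric]) auto
    also have "\<dots> = (\<Prod>X\<in>{1..N}. (1::real))"
    proof (rule prod.cong[OF refl])
      fix X assume X: "X \<in> {1..N}"
      have "P X (ext (sum_nodes S) h) (spn_root S) True + P X (ext (sum_nodes S) h) (spn_root S) False = 1"
        by (rule P_sum1[OF rootV _ va]) (use X sc in simp)
      then show "(\<Sum>b\<in>UNIV. P X (ext (sum_nodes S) h) (spn_root S) b) = 1"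
        by (simp add: UNIV_bool add.commute)
    qed
    finally show ?thesis by simp
  qed
  have "(\<Sum>x\<in>assignments N. f_spn S x) = (\<Sum>h\<in>hidden_assignments S. (\<Prod>s\<in>sum_nodes S. hidden_cpd S s (h s)) *
     (\<Sum>x\<in>assignments N. \<Prod>X\<in>{1..N}. P X (ext (sum_nodes S) h) (spn_root S) (x X)))"
    unfolding f_eq[OF assms] by (subst sum.swap) (simp add: sum_distrib_left)
  also have "\<dots> = (\<Sum>h\<in>hidden_assignments S. (\<Prod>s\<in>sum_nodes S. hidden_cpd S s (h s)) * 1)"
    using inner by simp
  also have "\<dots> = SS (sum_nodes S) (\<lambda>_. 1)" by (simp add: SS_def hidden_assignments_def)
  also have "\<dots> = SS {} (\<lambda>_. 1)" by (rule SS_sub) (auto simp: dep_def)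
  also have "\<dots> = 1" by (simp add: SS_empty)
  finally show ?thesis .
qed

end

theorem theorem4:
  fixes S :: "'v spn" and N :: nat
  assumes "spn_wf S" and "normal S" and "spn_over N S"
  shows "\<forall>x\<in>assignments N. Pr_spn N S x = Pr_bn N S x"
proof
  fix x assume "x \<in> assignments N"
  interpret spnL S using assms(1,2) by unfold_locales
  show "Pr_spn N S x = Pr_bn N S x"
    unfolding Pr_spn_def norm1[OF assms(3)] bn_eq[OF assms(3)] by simp
qed



end
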